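(* Fix range parameters $0<L_I\le U_I$ and $0\le L_V\le U_V$, and let $\alpha=(a_1,\dots,a_w)$. Let $a_i\in\mathbb{L}^{t+1}_\alpha$. Suppose $a_k$ is the leftmost non-black item of $\mathbb{L}^t_\alpha$ satisfying $L_V\le a_i-a_k$ and $i-k\le U_I$; that is, $a_k$ is the leftmost partially-proper item of $a_i$. Then $a_i$ has a range-proper predecessor if and only if $a_k$ is a range-proper predecessor of $a_i$.
   Context: Let $\alpha=(a_1,\dots,a_w)$ be a finite sequence of real numbers, with items identified by their positions. Increasing subsequences are non-strict. $a_j$ is compatible with $a_i$ if $j<i$ and $a_j\le a_i$. $RL_\alpha(a)$ is the maximum length of an increasing subsequence ending at $a$. $a_j$ is a predecessor of $a_i$ if it is compatible with $a_i$ and $RL_\alpha(a_j)=RL_\alpha(a_i)-1$. The horizontal list $\mathbb{L}^t_\alpha$ is the list of items of rising length $t$, ordered by position; "left of" means earlier position. Items are colored black or non-black recursively by level: all items of $\mathbb{L}^1_\alpha$ are non-black, and an item of $\mathbb{L}^{t+1}_\alpha$ is non-black iff it has a range-proper predecessor. Here a range-proper predecessor of $a_i$ is a non-black predecessor $a_k$ with $L_V\le a_i-a_k\le U_V$ and $L_I\le i-k\le U_I$. *)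

theory Defs
  imports Complex_Main
begin

text \<open>The sequence alpha = (a_1,...,a_w) is a list xs of reals; item a_i is xs ! i with
  0-based position i < length xs (positions are only compared / subtracted, so the shift
  from 1-based indexing is immaterial).\<close>

definition compatible :: "real list \<Rightarrow> nat \<Rightarrow> nat \<Rightarrow> bool" where
  "compatible xs j i \<longleftrightarrow> j < i \<and> i < length xs \<and> xs ! j \<le> xs ! i"

definition inc_subseq_ending :: "real list \<Rightarrow> nat \<Rightarrow> nat list \<Rightarrow> bool" where
  "inc_subseq_ending xs i js \<longleftrightarrow>
     js \<noteq> [] \<and> last js = i \<and> sorted_wrt (<) js \<and> (\<forall>j\<in>set js. j < length xs) \<and>
     sorted_wrt (\<lambda>p q. xs ! p \<le> xs ! q) js"

definition RL :: "real list \<Rightarrow> nat \<Rightarrow> nat" where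
  "RL xs i = Max (length ` {js. inc_subseq_ending xs i js})"

definition predecessor :: "real list \<Rightarrow> nat \<Rightarrow> nat \<Rightarrow> bool" where
  "predecessor xs j i \<longleftrightarrow> compatible xs j i \<and> RL xs j = RL xs i - 1"

definition in_L :: "real list \<Rightarrow> nat \<Rightarrow> nat \<Rightarrow> bool" where
  "in_L xs t i \<longleftrightarrow> i < length xs \<and> RL xs i = t"

text \<open>Non-black items (least fixed point of the level-by-level recursive colouring).\<close>
inductive nonblack :: "nat \<Rightarrow> nat \<Rightarrow> real \<Rightarrow> real \<Rightarrow> real list \<Rightarrow> nat \<Rightarrow> bool"
  for LI UI :: nat and LV UV :: real and xs :: "real list" where
  level1: "i < length xs \<Longrightarrow> RL xs i = 1 \<Longrightarrow> nonblack LI UI LV UV xs i"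
| step: "predecessor xs k i \<Longrightarrow> nonblack LI UI LV UV xs k \<Longrightarrow>
         LV \<le> xs ! i - xs ! k \<Longrightarrow> xs ! i - xs ! k \<le> UV \<Longrightarrow>
         int LI \<le> int i - int k \<Longrightarrow> int i - int k \<le> int UI \<Longrightarrow>
         nonblack LI UI LV UV xs i"

definition range_proper_pred :: "nat \<Rightarrow> nat \<Rightarrow> real \<Rightarrow> real \<Rightarrow> real list \<Rightarrow> nat \<Rightarrow> nat \<Rightarrow> bool" where
  "range_proper_pred LI UI LV UV xs k i \<longleftrightarrow>
     predecessor xs k i \<and> nonblack LI UI LV UV xs k \<and>
     LV \<le> xs ! i - xs ! k \<and> xs ! i - xs ! k \<le> UV \<and>
     int LI \<le> int i - int k \<and> int i - int k \<le> int UI"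

end

theory Submission
  imports Defs
begin

lemma sw_last: "sorted_wrt R js \<Longrightarrow> js \<noteq> [] \<Longrightarrow> x \<in> set js \<Longrightarrow> x = last js \<or> R x (last js)"
  by (induction js) (auto simp: last_in_set)

lemma RL_fin: "finite (length ` {js. inc_subseq_ending xs i js})"
proof (rule finite_subset[of _ "{..length xs}"])
  show "length ` {js. inc_subseq_ending xs i js} \<subseteq> {..length xs}"
  proof
    fix n assume "n \<in> length ` {js. inc_subseq_ending xs i js}"
    then obtain js where js: "inc_subseq_ending xs i js" "n = length js" by auto
    have d: "distinct js" using js(1) unfolding inc_subseq_ending_def
      using strict_sorted_iff by blast
    have "set js \<subseteq> {..<length xs}" using js(1) unfolding inc_subseq_ending_def by auto
    hence "card (set js) \<le> length xs" using card_mono[of "{..<length xs}"] by fastforce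
    thus "n \<in> {..length xs}" using js(2) distinct_card[OF d] by simp
  qed
qed simp

lemma RL_less:
  assumes "j < i" "i < length xs" "xs ! j \<le> xs ! i"
  shows "RL xs j < RL xs i"
proof -
  have ne: "[j] \<in> {js. inc_subseq_ending xs j js}"
    using assms by (auto simp: inc_subseq_ending_def)
  have "RL xs j \<in> length ` {js. inc_subseq_ending xs j js}"
    unfolding RL_def using RL_fin ne by (intro Max_in) auto
  then obtain js where js: "inc_subseq_ending xs j js" "RL xs j = length js" by auto
  have "inc_subseq_ending xs i (js @ [i])"
  proof -
    have l: "last js = j" "js \<noteq> []" using js(1) by (auto simp: inc_subseq_ending_def)
    have a: "\<forall>x\<in>set js. x < i" using sw_last[of "(<)" js] js(1) l assms(1)
      unfolding inc_subseq_ending_def by fastforce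
    have b: "\<forall>x\<in>set js. xs ! x \<le> xs ! i"
      using sw_last[of "\<lambda>p q. xs ! p \<le> xs ! q" js] js(1) l assms(3)
      unfolding inc_subseq_ending_def by fastforce
    show ?thesis using js(1) a b assms(2) unfolding inc_subseq_ending_def
      by (auto simp: sorted_wrt_append)
  qed
  hence "length (js @ [i]) \<le> RL xs i" unfolding RL_def
    by (intro Max_ge[OF RL_fin]) (rule imageI, simp)
  thus ?thesis using js(2) by simp
qed

theorem mainTheorem13:
  fixes LI UI :: nat and LV UV :: real and xs :: "real list" and i k t :: nat
  assumes "0 < LI" and "LI \<le> UI" and "0 \<le> LV" and "LV \<le> UV"
    and "in_L xs (t + 1) i"
    and "in_L xs t k" and "nonblack LI UI LV UV xs k"
    and "LV \<le> xs ! i - xs ! k" and "int i - int k \<le> int UI"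
    and "\<forall>k'<k. \<not> (in_L xs t k' \<and> nonblack LI UI LV UV xs k' \<and>
                     LV \<le> xs ! i - xs ! k' \<and> int i - int k' \<le> int UI)"
  shows "(\<exists>k'. range_proper_pred LI UI LV UV xs k' i) \<longleftrightarrow> range_proper_pred LI UI LV UV xs k i"
proof
  assume "\<exists>k'. range_proper_pred LI UI LV UV xs k' i"
  then obtain k' where r: "range_proper_pred LI UI LV UV xs k' i" by blast
  hence p: "predecessor xs k' i" and nb: "nonblack LI UI LV UV xs k'"
    and v1: "LV \<le> xs ! i - xs ! k'" and v2: "xs ! i - xs ! k' \<le> UV"
    and i1: "int LI \<le> int i - int k'" and i2: "int i - int k' \<le> int UI"
    unfolding range_proper_pred_def by auto
  have c: "k' < i" "i < length xs" and rl: "RL xs k' = RL xs i - 1"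
    using p unfolding predecessor_def compatible_def by auto
  have rli: "RL xs i = t + 1" "RL xs k = t" "k < length xs"
    using assms(5,6) unfolding in_L_def by auto
  have kL: "in_L xs t k'" using rl rli c unfolding in_L_def by auto
  have kk: "k \<le> k'" using assms(10) kL nb v1 i2 by (meson not_le)
  have val: "xs ! i - xs ! k \<le> UV"
  proof (cases "k = k'")
    case False
    hence "k < k'" using kk by simp
    moreover have "RL xs k = RL xs k'" using kL rli unfolding in_L_def by simp
    ultimately have "\<not> xs ! k \<le> xs ! k'" using RL_less[of k k' xs] c by fastforce
    thus ?thesis using v2 by linarith
  qed (use v2 in simp)
  have "predecessor xs k i" unfolding predecessor_def compatible_def
    using kk c rli assms(3,8) by auto
  thus "range_proper_pred LI UI LV UV xs k i" unfolding range_proper_pred_def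
    using assms(7,8,9) val i1 kk by auto
qed blast

end
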